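(* Let $L_g$ be a Gaussian Lévy basis on $\mathbb{R}^2$ with $L_g(B)\sim\mathcal{N}(\mu\,\mathrm{Leb}(B),\sigma^2\mathrm{Leb}(B))$, let $\phi:(-\infty,0]\to[0,\infty)$ be continuous and increasing with $\int_{-\infty}^0\phi<\infty$, $A=\{(s,x):s<0,\ 0<x<\phi(s)\}$, $A_t=A+(t,0)$, and $X_t=L_g(A_t)$. Then $X$ has a modification whose paths are locally Hölder continuous with every exponent $\alpha\in(0,1/2)$.
   Context: A Gaussian Lévy basis is a family $\{L_g(B): B\}$ indexed by Borel sets of finite Lebesgue measure such that values on disjoint sets are independent, $L_g$ is countably additive a.s., and $L_g(B)\sim\mathcal{N}(\mu\,\mathrm{Leb}(B),\sigma^2\mathrm{Leb}(B))$. *)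

theory Defs
  imports "HOL-Probability.Probability"
begin

definition gauss_measure :: "real \<Rightarrow> real \<Rightarrow> real measure" where
  "gauss_measure m v =
     (if v > 0 then density lborel (normal_density m (sqrt v)) else return borel m)"

definition gaussian_levy_basis ::
  "'w measure \<Rightarrow> ((real \<times> real) set \<Rightarrow> 'w \<Rightarrow> real) \<Rightarrow> real \<Rightarrow> real \<Rightarrow> bool" where
  "gaussian_levy_basis M L \<mu> \<sigma> \<longleftrightarrow>
     prob_space M \<and>
     (\<forall>B\<in>sets lborel. emeasure lborel B < \<infinity> \<longrightarrow>
        L B \<in> borel_measurable M \<and>
        distr M borel (L B) = gauss_measure (\<mu> * measure lborel B) (\<sigma>\<^sup>2 * measure lborel B)) \<and>
     (\<forall>(I :: nat set) B. finite I \<longrightarrow>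
        (\<forall>i\<in>I. B i \<in> sets lborel \<and> emeasure lborel (B i) < \<infinity>) \<longrightarrow>
        disjoint_family_on B I \<longrightarrow>
        prob_space.indep_vars M (\<lambda>_. borel) (\<lambda>i. L (B i)) I) \<and>
     (\<forall>B :: nat \<Rightarrow> (real \<times> real) set.
        (\<forall>i. B i \<in> sets lborel) \<longrightarrow> disjoint_family B \<longrightarrow>
        emeasure lborel (\<Union>i. B i) < \<infinity> \<longrightarrow>
        (AE \<omega> in M. (\<lambda>n. L (B n) \<omega>) sums L (\<Union>i. B i) \<omega>))"

definition locally_hoelder :: "real \<Rightarrow> (real \<Rightarrow> real) \<Rightarrow> bool" where
  "locally_hoelder \<alpha> f \<longleftrightarrow>
     (\<forall>a b. \<exists>C. \<forall>s\<in>{a..b}. \<forall>t\<in>{a..b}. \<bar>f s - f t\<bar> \<le> C * \<bar>s - t\<bar> powr \<alpha>)"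

end

theory Submission
  imports Defs
begin


definition dy :: "nat \<Rightarrow> real \<Rightarrow> real" where
  "dy n t = of_int \<lfloor>t * 2^n\<rfloor> / 2^n"

lemma floor_double: "\<lfloor>2 * y\<rfloor> = 2 * \<lfloor>y\<rfloor> \<or> \<lfloor>2 * y\<rfloor> = 2 * \<lfloor>y\<rfloor> + 1" for y :: real
proof -
  have a: "of_int \<lfloor>y\<rfloor> \<le> y" "y < of_int \<lfloor>y\<rfloor> + 1" by linarith+
  have "2 * \<lfloor>y\<rfloor> \<le> \<lfloor>2 * y\<rfloor>" using a by (simp add: le_floor_iff)
  moreover have "of_int (2 * \<lfloor>y\<rfloor> + 2) = 2 * of_int \<lfloor>y\<rfloor> + (2::real)" by simp
  then have "2 * y < of_int (2 * \<lfloor>y\<rfloor> + 2)" using a by linarith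
  then have "\<lfloor>2 * y\<rfloor> < 2 * \<lfloor>y\<rfloor> + 2" by (simp only: floor_less_iff)
  ultimately show ?thesis by linarith
qed

lemma dy_le: "dy n t \<le> t"
  unfolding dy_def by (simp add: divide_le_eq)

lemma dy_ge: "t - 1 / 2^n < dy n t"
proof -
  have "t * 2^n - 1 < of_int \<lfloor>t * 2^n\<rfloor>" by linarith
  then have "(t * 2^n - 1) / 2^n < of_int \<lfloor>t * 2^n\<rfloor> / 2^n"
    by (intro divide_strict_right_mono) auto
  moreover have "(t * 2^n - 1) / 2^n = t - 1 / 2^n" by (simp add: field_simps)
  ultimately show ?thesis unfolding dy_def by simp
qed

lemma dy_lower: "- real N \<le> t \<Longrightarrow> - real N \<le> dy n t"
proof -
  assume t: "- real N \<le> t"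
  have "- (real N * 2^n) \<le> t * 2^n" using mult_right_mono[OF t, of "2^n"] by simp
  then have "of_int (- (int N * 2^n)) \<le> t * 2^n" by simp
  then have "- (int N * 2^n) \<le> \<lfloor>t * 2^n\<rfloor>" by (simp only: le_floor_iff)
  then have "real_of_int (- (int N * 2^n)) \<le> of_int \<lfloor>t * 2^n\<rfloor>" by (simp only: of_int_le_iff)
  then show ?thesis unfolding dy_def by (simp add: field_simps)
qed

lemma floor_adj: "\<bar>a - b\<bar> \<le> 1 \<Longrightarrow> \<bar>\<lfloor>a\<rfloor> - \<lfloor>b\<rfloor>\<bar> \<le> 1" for a b :: real
proof -
  assume h: "\<bar>a - b\<bar> \<le> 1"
  have "of_int \<lfloor>a\<rfloor> \<le> a" "a < of_int \<lfloor>a\<rfloor> + 1" "of_int \<lfloor>b\<rfloor> \<le> b" "b < of_int \<lfloor>b\<rfloor> + 1" by linarith+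
  moreover have "a - b \<le> 1" "b - a \<le> 1" using h by auto
  ultimately have "real_of_int \<lfloor>a\<rfloor> - real_of_int \<lfloor>b\<rfloor> < 2" "real_of_int \<lfloor>a\<rfloor> - real_of_int \<lfloor>b\<rfloor> > -2" by linarith+
  then have "real_of_int (\<lfloor>a\<rfloor> - \<lfloor>b\<rfloor>) < 2" "real_of_int (\<lfloor>a\<rfloor> - \<lfloor>b\<rfloor>) > -2" by simp_all
  then have "\<lfloor>a\<rfloor> - \<lfloor>b\<rfloor> < 2" "\<lfloor>a\<rfloor> - \<lfloor>b\<rfloor> > -2" by linarith+
  then show ?thesis by auto
qed

definition gl :: "(real \<Rightarrow> real) \<Rightarrow> real \<Rightarrow> real" where
  "gl f t = lim (\<lambda>m. f (dy m t))"

locale chain =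
  fixes f :: "real \<Rightarrow> real" and q B :: real and N :: nat
  assumes q: "0 < q" "q < 1" and B: "0 \<le> B"
    and inc: "\<And>n (j::int). - real N \<le> of_int j / 2^n \<Longrightarrow> (of_int j + 1) / 2^n \<le> real N \<Longrightarrow>
                 \<bar>f ((of_int j + 1) / 2^n) - f (of_int j / 2^n)\<bar> \<le> B * q^n"
begin

lemma step:
  assumes t: "- real N \<le> t" "t \<le> real N"
  shows "\<bar>f (dy (Suc n) t) - f (dy n t)\<bar> \<le> B * q^(Suc n)"
proof -
  define j where "j = \<lfloor>t * 2^n\<rfloor>"
  have e: "t * 2^Suc n = 2 * (t * 2^n)" by simp
  have dn: "dy n t = of_int (2*j) / 2^Suc n" unfolding dy_def j_def by simp
  have lo: "- real N \<le> of_int (2*j) / 2^Suc n" using dy_lower[OF t(1), of n] dn by simp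
  show ?thesis
  proof (cases "\<lfloor>t * 2^Suc n\<rfloor> = 2 * j")
    case True
    then have "dy (Suc n) t = dy n t" using dn unfolding dy_def by simp
    then show ?thesis using q B by simp
  next
    case False
    then have j1: "\<lfloor>t * 2^Suc n\<rfloor> = 2*j + 1" using floor_double[of "t * 2^n"] unfolding e j_def by auto
    have du: "dy (Suc n) t = (of_int (2*j) + 1) / 2^Suc n" unfolding dy_def j1 by simp
    have "(of_int (2*j) + 1) / 2^Suc n \<le> real N" using dy_le[of "Suc n" t] t du by simp
    from inc[OF lo this] show ?thesis unfolding du dn .
  qed
qed

definition c :: real where "c = q / (1 - q)"

lemma c_nonneg: "c \<ge> 0" using q by (simp add: c_def)

lemma iter:
  assumes t: "- real N \<le> t" "t \<le> real N"
  shows "\<bar>f (dy (n + i) t) - f (dy n t)\<bar> \<le> B * q^n * (q * (1 - q^i) / (1 - q))"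
proof (induction i)
  case 0
  then show ?case by simp
next
  case (Suc i)
  have "\<bar>f (dy (n + Suc i) t) - f (dy n t)\<bar> \<le> \<bar>f (dy (Suc (n + i)) t) - f (dy (n+i) t)\<bar> + \<bar>f (dy (n + i) t) - f (dy n t)\<bar>"
    by simp
  also have "\<dots> \<le> B * q^(Suc (n+i)) + B * q^n * (q * (1 - q^i) / (1 - q))"
    using step[OF t, of "n+i"] Suc by linarith
  also have "\<dots> = B * q^n * (q * (1 - q^Suc i) / (1 - q))"
    using q by (simp add: field_simps power_add)
  finally show ?case .
qed

lemma iter2:
  assumes t: "- real N \<le> t" "t \<le> real N" and nm: "n \<le> m"
  shows "\<bar>f (dy m t) - f (dy n t)\<bar> \<le> B * q^n * c"
proof -
  obtain i where m: "m = n + i" using nm le_Suc_ex by blast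
  have "q * (1 - q^i) / (1 - q) \<le> c"
    unfolding c_def using q by (intro divide_right_mono) (auto simp: mult_left_le)
  then have "B * q^n * (q * (1 - q^i) / (1 - q)) \<le> B * q^n * c"
    using q B by (intro mult_left_mono) auto
  then show ?thesis using iter[OF t, of n i] m by simp
qed

lemma adj:
  assumes t: "- real N \<le> t" "t \<le> real N" and s: "- real N \<le> s" "s \<le> real N"
    and a: "\<bar>\<lfloor>t * 2^n\<rfloor> - \<lfloor>s * 2^n\<rfloor>\<bar> \<le> 1"
  shows "\<bar>f (dy n t) - f (dy n s)\<bar> \<le> B * q^n"
proof -
  have gen: "\<bar>f (dy n t) - f (dy n s)\<bar> \<le> B * q^n"
    if t: "- real N \<le> t" "t \<le> real N" and s: "- real N \<le> s" "s \<le> real N"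
      and e: "\<lfloor>t * 2^n\<rfloor> = \<lfloor>s * 2^n\<rfloor> + 1" for s t
  proof -
    define j where "j = \<lfloor>s * 2^n\<rfloor>"
    have ds: "dy n s = of_int j / 2^n" unfolding dy_def j_def by simp
    have dt: "dy n t = (of_int j + 1) / 2^n" unfolding dy_def e j_def by simp
    have "- real N \<le> of_int j / 2^n" using dy_lower[OF s(1), of n] ds by simp
    moreover have "(of_int j + 1) / 2^n \<le> real N" using dy_le[of n t] t dt by simp
    ultimately show ?thesis using inc unfolding ds dt by blast
  qed
  consider "\<lfloor>t * 2^n\<rfloor> = \<lfloor>s * 2^n\<rfloor>" | "\<lfloor>t * 2^n\<rfloor> = \<lfloor>s * 2^n\<rfloor> + 1" | "\<lfloor>s * 2^n\<rfloor> = \<lfloor>t * 2^n\<rfloor> + 1"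
    using a by linarith
  then show ?thesis
  proof cases
    case 1
    then have "dy n t = dy n s" unfolding dy_def by simp
    then show ?thesis using q B by simp
  next
    case 2 then show ?thesis using gen t s by blast
  next
    case 3 then show ?thesis using gen[of s t] t s by (simp add: abs_minus_commute)
  qed
qed

abbreviation g :: "real \<Rightarrow> real" where "g \<equiv> gl f"

lemma conv:
  assumes t: "- real N \<le> t" "t \<le> real N"
  shows "(\<lambda>m. f (dy m t)) \<longlonglongrightarrow> g t"
proof -
  have "Cauchy (\<lambda>m. f (dy m t))"
  proof (rule metric_CauchyI)
    fix e :: real assume e: "0 < e"
    have "(\<lambda>n. 2 * B * c * q^n) \<longlonglongrightarrow> 2 * B * c * 0"
      using q by (intro tendsto_intros) auto
    then have "eventually (\<lambda>n. 2 * B * c * q^n < e) sequentially"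
      using e by (auto simp: order_tendsto_iff)
    then obtain n0 where n0: "2 * B * c * q^n0 < e" by (auto simp: eventually_sequentially)
    show "\<exists>M. \<forall>m\<ge>M. \<forall>n\<ge>M. dist (f (dy m t)) (f (dy n t)) < e"
    proof (intro exI allI impI)
      fix m n assume "n0 \<le> m" "n0 \<le> n"
      then have "\<bar>f (dy m t) - f (dy n0 t)\<bar> \<le> B * q^n0 * c" "\<bar>f (dy n t) - f (dy n0 t)\<bar> \<le> B * q^n0 * c"
        using iter2[OF t] by auto
      moreover have "\<bar>f (dy m t) - f (dy n t)\<bar> \<le> \<bar>f (dy m t) - f (dy n0 t)\<bar> + \<bar>f (dy n t) - f (dy n0 t)\<bar>" by arith
      moreover have "2 * B * c * q^n0 = B * q^n0 * c + B * q^n0 * c" by (simp add: algebra_simps)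
      ultimately show "dist (f (dy m t)) (f (dy n t)) < e" using n0 unfolding dist_real_def by linarith
    qed
  qed
  then show ?thesis unfolding gl_def by (simp add: Cauchy_convergent_iff convergent_LIMSEQ_iff)
qed

lemma g_adj:
  assumes t: "- real N \<le> t" "t \<le> real N" and s: "- real N \<le> s" "s \<le> real N"
    and a: "\<bar>\<lfloor>t * 2^n\<rfloor> - \<lfloor>s * 2^n\<rfloor>\<bar> \<le> 1"
  shows "\<bar>g t - g s\<bar> \<le> B * q^n * (2 * c + 1)"
proof -
  have lim: "(\<lambda>m. \<bar>f (dy m t) - f (dy m s)\<bar>) \<longlonglongrightarrow> \<bar>g t - g s\<bar>"
    using conv[OF t] conv[OF s] by (intro tendsto_intros)
  show ?thesis
  proof (rule LIMSEQ_le_const2[OF lim], intro exI allI impI)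
    fix m assume nm: "n \<le> m"
    have "\<bar>f (dy m t) - f (dy m s)\<bar> \<le> \<bar>f (dy m t) - f (dy n t)\<bar> + \<bar>f (dy n t) - f (dy n s)\<bar> + \<bar>f (dy m s) - f (dy n s)\<bar>"
      by linarith
    also have "\<dots> \<le> B * q^n * c + B * q^n + B * q^n * c"
      using iter2[OF t nm] iter2[OF s nm] adj[OF t s a] by linarith
    finally show "\<bar>f (dy m t) - f (dy m s)\<bar> \<le> B * q^n * (2 * c + 1)" by (simp add: algebra_simps)
  qed
qed

lemma g_near:
  assumes t: "- real N \<le> t" "t \<le> real N"
  shows "\<bar>g t - f (dy 0 t)\<bar> \<le> B * c"
proof -
  have lim: "(\<lambda>m. \<bar>f (dy m t) - f (dy 0 t)\<bar>) \<longlonglongrightarrow> \<bar>g t - f (dy 0 t)\<bar>"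
    using conv[OF t] by (intro tendsto_intros)
  show ?thesis using iter2[OF t, of 0] by (intro LIMSEQ_le_const2[OF lim]) auto
qed

lemma find_level:
  fixes h :: real assumes h: "0 < h" "h \<le> 1"
  obtains n where "(1/2)^(Suc n) < h" "h \<le> (1/2)^n"
proof -
  have ex: "\<exists>m. (1/2::real)^m < h" using real_arch_pow_inv[OF h(1), of "1/2"] by auto
  define m where "m = (LEAST m. (1/2::real)^m < h)"
  have m1: "(1/2::real)^m < h" unfolding m_def by (rule LeastI_ex[OF ex])
  have m0: "m \<noteq> 0" using m1 h by (cases m) auto
  then obtain n where mn: "m = Suc n" using not0_implies_Suc by blast
  have "\<not> (1/2::real)^n < h" using not_less_Least[of n "\<lambda>m. (1/2::real)^m < h"] mn unfolding m_def by auto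
  then show ?thesis using that m1 mn by auto
qed

lemma hoelder:
  assumes qg: "q = 2 powr (-\<gamma>)" and \<gamma>: "0 < \<gamma>" and \<alpha>: "0 < \<alpha>" "\<alpha> \<le> \<gamma>"
  shows "\<exists>C. \<forall>s t. - real N \<le> s \<longrightarrow> s \<le> real N \<longrightarrow> - real N \<le> t \<longrightarrow> t \<le> real N \<longrightarrow>
           \<bar>g s - g t\<bar> \<le> C * \<bar>s - t\<bar> powr \<alpha>"
proof -
  define Mx where "Mx = Max ((\<lambda>j. \<bar>f (of_int j)\<bar>) ` {- int N..int N})"
  have Mx0: "0 \<le> Mx" unfolding Mx_def
    by (rule order_trans[OF abs_ge_zero Max_ge[of _ "\<bar>f (of_int 0)\<bar>"]]) (auto intro!: image_eqI[where x=0])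
  have gb: "\<bar>g t\<bar> \<le> B * c + Mx" if t: "- real N \<le> t" "t \<le> real N" for t
  proof -
    have d0: "dy 0 t = of_int \<lfloor>t\<rfloor>" unfolding dy_def by simp
    have "- int N \<le> \<lfloor>t\<rfloor>" using t by (simp add: le_floor_iff)
    moreover have "\<lfloor>t\<rfloor> \<le> int N" using t by (simp add: floor_le_iff)
    ultimately have "\<bar>f (dy 0 t)\<bar> \<le> Mx" unfolding Mx_def d0 by (intro Max_ge) auto
    then show ?thesis using g_near[OF t] by linarith
  qed
  define C1 where "C1 = B * (2 * c + 1) * 2 powr \<gamma>"
  have C10: "C1 \<ge> 0" unfolding C1_def using B c_nonneg by auto
  define C where "C = C1 + 2 * (B * c + Mx)"
  have BcM: "0 \<le> B * c + Mx" using B c_nonneg Mx0 by auto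
  show ?thesis
  proof (intro exI allI impI)
    fix s t assume s: "- real N \<le> s" "s \<le> real N" and t: "- real N \<le> t" "t \<le> real N"
    define h where "h = \<bar>s - t\<bar>"
    have hp: "0 \<le> h powr \<alpha>" by simp
    consider "h = 0" | "0 < h" "h \<le> 1" | "1 < h" unfolding h_def by linarith
    then show "\<bar>g s - g t\<bar> \<le> C * \<bar>s - t\<bar> powr \<alpha>"
    proof cases
      case 1 then show ?thesis unfolding h_def by simp
    next
      case 2
      obtain n where n: "(1/2)^(Suc n) < h" "h \<le> (1/2)^n" using find_level[OF 2] .
      have "\<bar>s * 2^n - t * 2^n\<bar> = h * 2^n" unfolding h_def by (simp add: abs_mult left_diff_distrib[symmetric])
      also have "\<dots> \<le> (1/2)^n * 2^n" using n by (intro mult_right_mono) auto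
      also have "\<dots> = 1" by (simp add: power_one_over)
      finally have "\<bar>\<lfloor>s * 2^n\<rfloor> - \<lfloor>t * 2^n\<rfloor>\<bar> \<le> 1" by (rule floor_adj)
      from g_adj[OF s t this] have 1: "\<bar>g s - g t\<bar> \<le> B * q^n * (2 * c + 1)" .
      have "q^n = 2 powr (- \<gamma> * real n)" unfolding qg by (simp add: powr_realpow[symmetric] powr_powr)
      also have "\<dots> = 2 powr \<gamma> * (2 powr (- real (Suc n))) powr \<gamma>"
        by (simp add: powr_powr powr_add[symmetric] algebra_simps)
      also have "2 powr (- real (Suc n)) = (1/2)^(Suc n)"
      proof -
        have "2 powr (- real (Suc n)) = 1 / 2 powr real (Suc n)" by (rule powr_minus_divide)
        also have "(2::real) powr real (Suc n) = 2 ^ Suc n" by (rule powr_realpow) simp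
        finally show ?thesis by (simp add: power_one_over)
      qed
      also have "2 powr \<gamma> * ((1/2)^(Suc n)) powr \<gamma> \<le> 2 powr \<gamma> * h powr \<gamma>"
        using n \<gamma> by (intro mult_left_mono powr_mono2) auto
      also have "\<dots> \<le> 2 powr \<gamma> * h powr \<alpha>"
        using 2 \<alpha> by (intro mult_left_mono powr_mono') auto
      finally have qn: "q^n \<le> 2 powr \<gamma> * h powr \<alpha>" .
      have "\<bar>g s - g t\<bar> \<le> B * (2 * c + 1) * q^n" using 1 by (simp add: algebra_simps)
      also have "\<dots> \<le> B * (2 * c + 1) * (2 powr \<gamma> * h powr \<alpha>)"
        using qn B c_nonneg by (intro mult_left_mono) auto
      also have "\<dots> = C1 * h powr \<alpha>" unfolding C1_def by simp
      also have "\<dots> \<le> C * h powr \<alpha>" unfolding C_def using BcM hp by (intro mult_right_mono) auto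
      finally show ?thesis unfolding h_def .
    next
      case 3
      have "\<bar>g s - g t\<bar> \<le> \<bar>g s\<bar> + \<bar>g t\<bar>" by (rule abs_triangle_ineq4)
      also have "\<dots> \<le> (B * c + Mx) + (B * c + Mx)" using gb[OF s] gb[OF t] by (rule add_mono)
      also have "\<dots> = 2 * (B * c + Mx)" by simp
      also have "\<dots> = 2 * (B * c + Mx) * 1" by simp
      also have "\<dots> \<le> 2 * (B * c + Mx) * h powr \<alpha>"
        using BcM ge_one_powr_ge_zero[of h \<alpha>] 3 \<alpha> by (intro mult_left_mono) auto
      also have "\<dots> \<le> C * h powr \<alpha>" unfolding C_def using C10 hp by (intro mult_right_mono) auto
      finally show ?thesis unfolding h_def .
    qed
  qed
qed

end



lemma pow_ineq: "\<bar>a - b\<bar> ^ n \<le> 2 ^ n * (\<bar>a\<bar> ^ n + \<bar>b\<bar> ^ n)" for a b :: real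
proof -
  have "\<bar>a - b\<bar> \<le> 2 * max \<bar>a\<bar> \<bar>b\<bar>" by auto
  then have "\<bar>a - b\<bar> ^ n \<le> (2 * max \<bar>a\<bar> \<bar>b\<bar>) ^ n" by (intro power_mono) auto
  also have "\<dots> = 2 ^ n * max \<bar>a\<bar> \<bar>b\<bar> ^ n" by (simp add: power_mult_distrib)
  also have "max \<bar>a\<bar> \<bar>b\<bar> ^ n \<le> \<bar>a\<bar> ^ n + \<bar>b\<bar> ^ n" by (auto simp: max_def)
  finally show ?thesis by simp
qed

lemma pow_ineq_even: "(a - b) ^ (2*k) \<le> 2 ^ (2*k) * (a ^ (2*k) + b ^ (2*k))" for a b :: real
  using pow_ineq[of a b "2*k"] by (simp add: power_even_abs)

definition cmom :: "nat \<Rightarrow> real" where "cmom k = fact (2*k) / (2^k * fact k)"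

lemma cmom_nonneg: "cmom k \<ge> 0" by (simp add: cmom_def)

lemma gauss_moment:
  assumes v: "v \<ge> 0"
  shows "(\<integral>\<^sup>+x. ennreal (x ^ (2*k)) \<partial>gauss_measure m v) \<le> ennreal (2^(2*k) * (m^(2*k) + v^k * cmom k))"
proof (cases "v > 0")
  case True
  define s where "s = sqrt v"
  have s2: "s\<^sup>2 = v" using v by (simp add: s_def)
  have "s > 0" using True by (simp add: s_def)
  have hb1: "has_bochner_integral lborel (\<lambda>x. normal_density m s x * (x - m) ^ (2 * k)) (v^k * cmom k)"
    using normal_moment_even[where \<mu>=m and \<sigma>=s and k=k] s2 \<open>s > 0\<close>
    by (simp add: cmom_def power_divide field_simps)
  have hb0: "has_bochner_integral lborel (\<lambda>x. normal_density m s x) 1"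
    using normal_moment_even[where \<mu>=m and \<sigma>=s and k=0] True by (simp add: s_def)
  have hb: "has_bochner_integral lborel (\<lambda>x. 2^(2*k) * (normal_density m s x * (x - m) ^ (2 * k) + m^(2*k) * normal_density m s x))
      (2^(2*k) * (v^k * cmom k + m^(2*k) * 1))"
    by (intro has_bochner_integral_mult_right has_bochner_integral_add hb1 has_bochner_integral_mult_right hb0)
  have "(\<integral>\<^sup>+x. ennreal (x ^ (2*k)) \<partial>gauss_measure m v)
      = (\<integral>\<^sup>+x. ennreal (normal_density m s x) * ennreal (x ^ (2*k)) \<partial>lborel)"
    using True unfolding gauss_measure_def s_def[symmetric]
    by (simp, subst nn_integral_density) auto
  also have "\<dots> \<le> (\<integral>\<^sup>+x. ennreal (2^(2*k) * (normal_density m s x * (x - m) ^ (2 * k) + m^(2*k) * normal_density m s x)) \<partial>lborel)"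
  proof (rule nn_integral_mono)
    fix x :: real
    have nd: "normal_density m s x \<ge> 0" by (simp add: normal_density_nonneg)
    have "x ^ (2*k) \<le> 2^(2*k) * ((x - m) ^ (2*k) + m ^ (2*k))"
      using pow_ineq_even[of "x - m" "-m" k] by simp
    then have "normal_density m s x * x ^ (2*k) \<le> normal_density m s x * (2^(2*k) * ((x - m) ^ (2*k) + m ^ (2*k)))"
      using nd by (intro mult_left_mono) auto
    then show "ennreal (normal_density m s x) * ennreal (x ^ (2*k)) \<le> ennreal (2^(2*k) * (normal_density m s x * (x - m) ^ (2 * k) + m^(2*k) * normal_density m s x))"
    proof -
      have e: "ennreal (normal_density m s x) * ennreal (x ^ (2*k)) = ennreal (normal_density m s x * x ^ (2*k))"
        using nd by (simp add: ennreal_mult zero_le_even_power)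
      show ?thesis unfolding e
        by (rule ennreal_leI) (use \<open>normal_density m s x * x ^ (2*k) \<le> _\<close> in \<open>simp add: algebra_simps\<close>)
    qed
  qed
  also have "\<dots> = ennreal (2^(2*k) * (v^k * cmom k + m^(2*k) * 1))"
    using hb by (intro nn_integral_eq_integral[THEN trans])
      (auto simp: has_bochner_integral_iff normal_density_nonneg zero_le_even_power)
  finally show ?thesis by (simp add: add.commute)
next
  case False
  then have "v = 0" using v by auto
  then have "(\<integral>\<^sup>+x. ennreal (x ^ (2*k)) \<partial>gauss_measure m v) = ennreal (m ^ (2*k))"
    by (simp add: gauss_measure_def nn_integral_return)
  also have "\<dots> \<le> ennreal (2^(2*k) * (m^(2*k) + v^k * cmom k))"
  proof (rule ennreal_leI)
    have "1 * m^(2*k) \<le> 2^(2*k) * m^(2*k)"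
      by (intro mult_right_mono) (auto simp: zero_le_even_power)
    also have "\<dots> \<le> 2^(2*k) * (m^(2*k) + v^k * cmom k)"
      using v cmom_nonneg by (intro mult_left_mono) auto
    finally show "m^(2*k) \<le> 2^(2*k) * (m^(2*k) + v^k * cmom k)" by simp
  qed
  finally show ?thesis .
qed

locale lbx =
  fixes M :: "'w measure"
    and L :: "(real \<times> real) set \<Rightarrow> 'w \<Rightarrow> real"
    and \<mu> \<sigma> :: real
    and \<phi> :: "real \<Rightarrow> real"
    and A :: "(real \<times> real) set"
    and X :: "real \<Rightarrow> 'w \<Rightarrow> real"
  assumes levy: "gaussian_levy_basis M L \<mu> \<sigma>"
    and cont: "continuous_on {..0} \<phi>"
    and incr: "mono_on {..0} \<phi>"
    and nonneg: "\<forall>s\<le>0. \<phi> s \<ge> 0"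
    and integr: "set_integrable lborel {..0} \<phi>"
    and A_def: "A = {(s, x). s < 0 \<and> 0 < x \<and> x < \<phi> s}"
    and X_def: "\<forall>t. X t = L ((\<lambda>p. p + (t, 0)) ` A)"
begin

lemma A_mem: "(s, x) \<in> A \<longleftrightarrow> s < 0 \<and> 0 < x \<and> x < \<phi> s"
  using A_def by simp

definition At :: "real \<Rightarrow> (real \<times> real) set" where
  "At t = (\<lambda>p. p + (t, 0)) ` A"

lemma At_eq: "At t = {(u, x). u < t \<and> 0 < x \<and> x < \<phi> (u - t)}"
proof safe
  fix u x assume "(u, x) \<in> At t"
  then show "u < t" "0 < x" "x < \<phi> (u - t)" by (auto simp: At_def A_mem)
next
  fix u x assume "u < t" "0 < x" "x < \<phi> (u - t)"
  then have "(u - t, x) \<in> A" by (auto simp: A_mem)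
  moreover have "(u, x) = (u - t, x) + (t, 0)" by simp
  ultimately show "(u, x) \<in> At t" unfolding At_def by blast
qed

definition psi :: "real \<Rightarrow> real" where "psi s = \<phi> (min s 0)"

lemma psi_cont: "continuous_on UNIV psi"
  unfolding psi_def
  by (rule continuous_on_compose2[OF cont]) (auto intro!: continuous_intros)

lemma psi_meas[measurable]: "psi \<in> borel_measurable borel"
  using psi_cont by (rule borel_measurable_continuous_onI)

lemma At_eq2: "At t = {p. fst p < t \<and> 0 < snd p \<and> snd p < psi (fst p - t)}"
  unfolding At_eq psi_def by auto

lemma At_sets: "At t \<in> sets lborel"
proof -
  have [measurable]: "fst \<in> borel_measurable (borel :: (real\<times>real) measure)"
    "snd \<in> borel_measurable (borel :: (real\<times>real) measure)"
    by (intro borel_measurable_continuous_onI continuous_intros)+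
  have "{p::real\<times>real. fst p < t \<and> 0 < snd p \<and> snd p < psi (fst p - t)} \<in> sets borel"
    by measurable
  then show ?thesis unfolding At_eq2 by simp
qed

lemma A_eq: "A = At 0"
  unfolding At_eq by (auto simp: A_mem)

lemma emeasure_At: "emeasure lborel (At t) = emeasure lborel A"
proof -
  have "emeasure lborel (At t) = emeasure (distr lborel borel ((+) (t,0))) (At t)"
    by (simp add: lborel_distr_plus)
  also have "\<dots> = emeasure lborel (((+) (t,0)) -` At t)"
    using At_sets[of t] by (subst emeasure_distr) auto
  also have "((+) (t,0)) -` At t = A"
    unfolding At_eq by (auto simp: A_mem)
  finally show ?thesis .
qed

lemma A_sets: "A \<in> sets lborel"
  using At_sets[of 0] A_eq by simp

lemma A_fin: "emeasure lborel A < \<infinity>"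
proof -
  have As: "A \<in> sets (lborel \<Otimes>\<^sub>M lborel)"
    unfolding lborel_prod by (rule A_sets)
  have "emeasure lborel A = emeasure (lborel \<Otimes>\<^sub>M lborel) A"
    by (simp add: lborel_prod)
  also have "\<dots> = (\<integral>\<^sup>+s. emeasure lborel (Pair s -` A) \<partial>lborel)"
    using As by (rule lborel.emeasure_pair_measure_alt)
  also have "\<dots> \<le> (\<integral>\<^sup>+s. ennreal (indicator {..0} s * \<phi> s) \<partial>lborel)"
  proof (rule nn_integral_mono)
    fix s :: real
    show "emeasure lborel (Pair s -` A) \<le> ennreal (indicator {..0} s * \<phi> s)"
    proof (cases "s < 0")
      case True
      then have "Pair s -` A = {0<..<\<phi> s}" by (auto simp: A_mem)
      moreover have "\<phi> s \<ge> 0" using nonneg True by auto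
      ultimately show ?thesis using True by (simp add: indicator_def)
    next
      case False
      then have "Pair s -` A = {}" by (auto simp: A_mem)
      then show ?thesis by simp
    qed
  qed
  also have "\<dots> = ennreal (LINT s:{..0}|lborel. \<phi> s)"
    using integr nonneg unfolding set_integrable_def set_lebesgue_integral_def
    by (simp only: real_scaleR_def, intro nn_integral_eq_integral) (auto simp: indicator_def)
  finally show ?thesis by (auto simp: top_unique less_top[symmetric])
qed

lemma At_fin: "emeasure lborel (At t) < \<infinity>"
  using A_fin emeasure_At by simp

lemma phi_mono: "a \<le> b \<Longrightarrow> b \<le> 0 \<Longrightarrow> \<phi> a \<le> \<phi> b"
  using incr by (auto simp: mono_on_def)

lemma D1_sub: "s \<le> t \<Longrightarrow> At t - At s \<subseteq> {s..t} \<times> {0..\<phi> 0}"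
proof (intro subsetI)
  fix p assume st: "s \<le> t" and p: "p \<in> At t - At s"
  obtain u x where pe: "p = (u, x)" by (cases p)
  have h: "u < t" "0 < x" "x < \<phi> (u - t)" using p pe by (auto simp: At_eq)
  have n: "\<not> (u < s \<and> 0 < x \<and> x < \<phi> (u - s))" using p pe by (auto simp: At_eq)
  have "\<not> u < s"
  proof
    assume "u < s"
    then have "\<phi> (u - t) \<le> \<phi> (u - s)" using st by (intro phi_mono) auto
    then show False using n h \<open>u < s\<close> by auto
  qed
  moreover have "\<phi> (u - t) \<le> \<phi> 0" using h by (intro phi_mono) auto
  ultimately show "p \<in> {s..t} \<times> {0..\<phi> 0}" using h pe by auto
qed

lemma emeasure_D1: "s \<le> t \<Longrightarrow> emeasure lborel (At t - At s) \<le> ennreal (\<phi> 0 * (t - s))"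
proof -
  assume st: "s \<le> t"
  have p0: "\<phi> 0 \<ge> 0" using nonneg by auto
  have "emeasure lborel (At t - At s) \<le> emeasure lborel ({s..t} \<times> {0..\<phi> 0})"
    using D1_sub[OF st] by (intro emeasure_mono) (auto intro!: borel_closed closed_Times)
  also have "\<dots> = emeasure (lborel \<Otimes>\<^sub>M lborel) ({s..t} \<times> {0..\<phi> 0})"
    by (simp add: lborel_prod)
  also have "\<dots> = ennreal (t - s) * ennreal (\<phi> 0)"
    using st p0 by (subst lborel.emeasure_pair_measure_Times) auto
  also have "\<dots> = ennreal (\<phi> 0 * (t - s))"
    using st p0 by (simp add: ennreal_mult' mult.commute)
  finally show ?thesis .
qed

lemma Diff_sets: "At t - At s \<in> sets lborel"
  using At_sets by auto

lemma Int_sets: "At t \<inter> At s \<in> sets lborel"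
  using At_sets by auto

lemma Diff_fin: "emeasure lborel (At t - At s) < \<infinity>"
  using At_fin[of t] by (meson Diff_subset At_sets emeasure_mono le_less_trans Diff_sets)

lemma Int_fin: "emeasure lborel (At t \<inter> At s) < \<infinity>"
  using At_fin[of t] by (meson Int_lower1 At_sets emeasure_mono le_less_trans Int_sets)

lemma emeasure_Diff_sym: "emeasure lborel (At t - At s) = emeasure lborel (At s - At t)"
proof -
  have "emeasure lborel (At t \<inter> At s) + emeasure lborel (At t - At s) = emeasure lborel (At t)"
    using Int_sets Diff_sets by (subst plus_emeasure) (auto intro!: arg_cong[where f="emeasure lborel"])
  also have "\<dots> = emeasure lborel (At s)" using emeasure_At by simp
  also have "\<dots> = emeasure lborel (At t \<inter> At s) + emeasure lborel (At s - At t)"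
    using Int_sets Diff_sets by (subst plus_emeasure) (auto intro!: arg_cong[where f="emeasure lborel"])
  finally show ?thesis using Int_fin[of t s]
    by (auto simp: ennreal_add_left_cancel less_top)
qed

lemma measure_Diff_le: "measure lborel (At t - At s) \<le> \<phi> 0 * \<bar>t - s\<bar>"
proof (cases "s \<le> t")
  case True
  then have "emeasure lborel (At t - At s) \<le> ennreal (\<phi> 0 * \<bar>t - s\<bar>)"
    using emeasure_D1 by simp
  then show ?thesis using nonneg
    by (simp add: measure_def enn2real_leI)
next
  case False
  then have "emeasure lborel (At s - At t) \<le> ennreal (\<phi> 0 * \<bar>t - s\<bar>)"
    using emeasure_D1[of t s] by simp
  then show ?thesis using nonneg emeasure_Diff_sym[of t s]
    by (simp add: measure_def enn2real_leI)
qed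

lemma prob: "prob_space M"
  using levy unfolding gaussian_levy_basis_def by blast

lemma L_meas: "B \<in> sets lborel \<Longrightarrow> emeasure lborel B < \<infinity> \<Longrightarrow> L B \<in> borel_measurable M"
  using levy unfolding gaussian_levy_basis_def by blast

lemma L_distr: "B \<in> sets lborel \<Longrightarrow> emeasure lborel B < \<infinity> \<Longrightarrow>
   distr M borel (L B) = gauss_measure (\<mu> * measure lborel B) (\<sigma>\<^sup>2 * measure lborel B)"
  using levy unfolding gaussian_levy_basis_def by blast

lemma L_sums: "(\<forall>i. B i \<in> sets lborel) \<Longrightarrow> disjoint_family B \<Longrightarrow> emeasure lborel (\<Union>i. B i) < \<infinity> \<Longrightarrow>
        (AE \<omega> in M. (\<lambda>n. L (B n) \<omega>) sums L (\<Union>i. B i) \<omega>)"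
  using levy unfolding gaussian_levy_basis_def by blast

lemma X_At: "X t = L (At t)"
  using X_def by (simp add: At_def)

lemma X_meas[measurable]: "X t \<in> borel_measurable M"
  unfolding X_At using At_sets At_fin by (rule L_meas)

lemma L_empty: "AE \<omega> in M. L {} \<omega> = 0"
proof -
  have m: "L {} \<in> borel_measurable M" by (rule L_meas) auto
  have d: "distr M borel (L {}) = return borel 0"
    using L_distr[of "{}"] by (simp add: gauss_measure_def)
  have "AE x in distr M borel (L {}). x = 0"
    unfolding d by (subst AE_return) auto
  then show ?thesis using m by (subst (asm) AE_distr_iff) auto
qed

lemma L_add:
  assumes "B1 \<in> sets lborel" "B2 \<in> sets lborel" "B1 \<inter> B2 = {}" "emeasure lborel (B1 \<union> B2) < \<infinity>"
  shows "AE \<omega> in M. L (B1 \<union> B2) \<omega> = L B1 \<omega> + L B2 \<omega>"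
proof -
  define B where "B n = (if n = 0 then B1 else if n = 1 then B2 else {})" for n :: nat
  have U: "(\<Union>i. B i) = B1 \<union> B2"
    unfolding B_def by (auto split: if_splits)
  have "disjoint_family B" using assms(3)
    unfolding disjoint_family_on_def B_def by auto
  moreover have "\<forall>i. B i \<in> sets lborel" using assms by (simp add: B_def)
  moreover have "emeasure lborel (\<Union>i. B i) < \<infinity>" using assms U by simp
  ultimately have "AE \<omega> in M. (\<lambda>n. L (B n) \<omega>) sums L (\<Union>i. B i) \<omega>"
    by (intro L_sums)
  then show ?thesis using L_empty
  proof eventually_elim
    case (elim \<omega>)
    have "(\<lambda>n. L (B n) \<omega>) sums (\<Sum>n\<in>{0,1}. L (B n) \<omega>)"
      by (rule sums_finite) (use elim in \<open>auto simp: B_def\<close>)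
    then show ?case using elim(1) U by (auto simp: B_def dest: sums_unique2)
  qed
qed

lemma X_diff: "AE \<omega> in M. X t \<omega> - X s \<omega> = L (At t - At s) \<omega> - L (At s - At t) \<omega>"
proof -
  have 1: "AE \<omega> in M. L ((At t - At s) \<union> (At t \<inter> At s)) \<omega> = L (At t - At s) \<omega> + L (At t \<inter> At s) \<omega>"
    using Diff_sets Int_sets At_fin by (intro L_add) (auto simp: Un_Diff_Int)
  have 2: "AE \<omega> in M. L ((At s - At t) \<union> (At t \<inter> At s)) \<omega> = L (At s - At t) \<omega> + L (At t \<inter> At s) \<omega>"
    using Diff_sets Int_sets At_fin by (intro L_add) (auto simp: Int_commute Un_Diff_Int)
  have e1: "(At t - At s) \<union> (At t \<inter> At s) = At t" by auto
  have e2: "(At s - At t) \<union> (At t \<inter> At s) = At s" by auto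
  from 1 2 show ?thesis unfolding e1 e2 X_At by eventually_elim auto
qed

lemma L_moment:
  assumes B: "B \<in> sets lborel" "emeasure lborel B < \<infinity>"
  shows "(\<integral>\<^sup>+\<omega>. ennreal ((L B \<omega>) ^ (2*k)) \<partial>M)
     \<le> ennreal (2^(2*k) * ((\<mu> * measure lborel B)^(2*k) + (\<sigma>\<^sup>2 * measure lborel B)^k * cmom k))"
proof -
  have m: "L B \<in> borel_measurable M" using B by (rule L_meas)
  have "(\<integral>\<^sup>+\<omega>. ennreal ((L B \<omega>) ^ (2*k)) \<partial>M) = (\<integral>\<^sup>+x. ennreal (x ^ (2*k)) \<partial>distr M borel (L B))"
    using m by (subst nn_integral_distr) auto
  also have "\<dots> = (\<integral>\<^sup>+x. ennreal (x ^ (2*k)) \<partial>gauss_measure (\<mu> * measure lborel B) (\<sigma>\<^sup>2 * measure lborel B))"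
    using L_distr[OF B] by simp
  also have "\<dots> \<le> ennreal (2^(2*k) * ((\<mu> * measure lborel B)^(2*k) + (\<sigma>\<^sup>2 * measure lborel B)^k * cmom k))"
    by (rule gauss_moment) auto
  finally show ?thesis .
qed

lemma Gb_le:
  assumes "0 \<le> v" "v \<le> c * h" "0 \<le> h" "h \<le> 1" "0 \<le> c"
  shows "(\<mu> * v)^(2*k) + (\<sigma>\<^sup>2 * v)^k * cmom k \<le> (\<bar>\<mu>\<bar>^(2*k) * c^(2*k) + (\<sigma>\<^sup>2 * c)^k * cmom k) * h^k"
proof -
  have "(\<mu> * v)^(2*k) = \<bar>\<mu>\<bar>^(2*k) * v^(2*k)"
    by (simp add: power_mult_distrib power_even_abs)
  also have "\<dots> \<le> \<bar>\<mu>\<bar>^(2*k) * (c*h)^(2*k)"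
    using assms by (intro mult_left_mono power_mono) auto
  also have "\<dots> = \<bar>\<mu>\<bar>^(2*k) * c^(2*k) * h^(2*k)"
    by (simp add: power_mult_distrib)
  also have "\<dots> \<le> \<bar>\<mu>\<bar>^(2*k) * c^(2*k) * h^k"
    using assms by (intro mult_left_mono power_decreasing) auto
  finally have 1: "(\<mu> * v)^(2*k) \<le> \<bar>\<mu>\<bar>^(2*k) * c^(2*k) * h^k" .
  have "(\<sigma>\<^sup>2 * v)^k \<le> (\<sigma>\<^sup>2 * (c*h))^k"
    using assms by (intro power_mono mult_left_mono) auto
  also have "\<dots> = (\<sigma>\<^sup>2 * c)^k * h^k" by (simp add: power_mult_distrib)
  finally have 2: "(\<sigma>\<^sup>2 * v)^k * cmom k \<le> (\<sigma>\<^sup>2 * c)^k * h^k * cmom k"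
    using cmom_nonneg by (intro mult_right_mono) auto
  show ?thesis using 1 2 by (simp add: algebra_simps)
qed

definition Kc :: "nat \<Rightarrow> real" where
  "Kc k = 2^(2*k) * (2 * (2^(2*k) * (\<bar>\<mu>\<bar>^(2*k) * \<phi> 0^(2*k) + (\<sigma>\<^sup>2 * \<phi> 0)^k * cmom k)))"

lemma Kc_nonneg: "Kc k \<ge> 0"
  using nonneg cmom_nonneg unfolding Kc_def by (auto intro!: mult_nonneg_nonneg add_nonneg_nonneg)

lemma X_moment:
  assumes h: "\<bar>t - s\<bar> \<le> 1"
  shows "(\<integral>\<^sup>+\<omega>. ennreal ((X t \<omega> - X s \<omega>) ^ (2*k)) \<partial>M) \<le> ennreal (Kc k * \<bar>t - s\<bar>^k)"
proof -
  define D1 where "D1 = At t - At s"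
  define D2 where "D2 = At s - At t"
  define G0 where "G0 = \<bar>\<mu>\<bar>^(2*k) * \<phi> 0^(2*k) + (\<sigma>\<^sup>2 * \<phi> 0)^k * cmom k"
  have p0: "\<phi> 0 \<ge> 0" using nonneg by auto
  have [measurable]: "L D1 \<in> borel_measurable M" "L D2 \<in> borel_measurable M"
    unfolding D1_def D2_def using Diff_sets Diff_fin by (auto intro: L_meas)
  have b: "(\<integral>\<^sup>+\<omega>. ennreal ((L D \<omega>) ^ (2*k)) \<partial>M) \<le> ennreal (2^(2*k) * (G0 * \<bar>t - s\<bar>^k))"
    if "D = D1 \<or> D = D2" for D
  proof -
    have D: "D \<in> sets lborel" "emeasure lborel D < \<infinity>"
      using that Diff_sets Diff_fin unfolding D1_def D2_def by auto
    have v: "measure lborel D \<le> \<phi> 0 * \<bar>t - s\<bar>"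
      using that measure_Diff_le[of t s] measure_Diff_le[of s t] unfolding D1_def D2_def
      by (auto simp: abs_minus_commute)
    note L_moment[OF D, of k]
    also have "ennreal (2^(2*k) * ((\<mu> * measure lborel D)^(2*k) + (\<sigma>\<^sup>2 * measure lborel D)^k * cmom k))
       \<le> ennreal (2^(2*k) * (G0 * \<bar>t - s\<bar>^k))"
      unfolding G0_def using Gb_le[of "measure lborel D" "\<phi> 0" "\<bar>t - s\<bar>" k] v h p0
      by (intro ennreal_leI mult_left_mono) auto
    finally show ?thesis .
  qed
  have "(\<integral>\<^sup>+\<omega>. ennreal ((X t \<omega> - X s \<omega>) ^ (2*k)) \<partial>M)
      = (\<integral>\<^sup>+\<omega>. ennreal ((L D1 \<omega> - L D2 \<omega>) ^ (2*k)) \<partial>M)"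
    using X_diff[of t s] unfolding D1_def D2_def
    by (intro nn_integral_cong_AE) (auto elim: eventually_mono)
  also have "\<dots> \<le> (\<integral>\<^sup>+\<omega>. ennreal (2^(2*k)) * (ennreal ((L D1 \<omega>) ^ (2*k)) + ennreal ((L D2 \<omega>) ^ (2*k))) \<partial>M)"
  proof (rule nn_integral_mono)
    fix \<omega>
    have "ennreal ((L D1 \<omega> - L D2 \<omega>) ^ (2*k)) \<le> ennreal (2^(2*k) * ((L D1 \<omega>) ^ (2*k) + (L D2 \<omega>) ^ (2*k)))"
      by (rule ennreal_leI) (rule pow_ineq_even)
    also have "\<dots> = ennreal (2^(2*k)) * (ennreal ((L D1 \<omega>) ^ (2*k)) + ennreal ((L D2 \<omega>) ^ (2*k)))"
      by (simp add: ennreal_mult zero_le_even_power)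
    finally show "ennreal ((L D1 \<omega> - L D2 \<omega>) ^ (2*k)) \<le> \<dots>" .
  qed
  also have "\<dots> = ennreal (2^(2*k)) * ((\<integral>\<^sup>+\<omega>. ennreal ((L D1 \<omega>) ^ (2*k)) \<partial>M) + (\<integral>\<^sup>+\<omega>. ennreal ((L D2 \<omega>) ^ (2*k)) \<partial>M))"
    by (subst nn_integral_cmult) (auto simp: nn_integral_add)
  also have "\<dots> \<le> ennreal (2^(2*k)) * (ennreal (2^(2*k) * (G0 * \<bar>t - s\<bar>^k)) + ennreal (2^(2*k) * (G0 * \<bar>t - s\<bar>^k)))"
    using b by (intro mult_left_mono add_mono) auto
  also have "\<dots> = ennreal (Kc k * \<bar>t - s\<bar>^k)"
  proof -
    have "G0 \<ge> 0" unfolding G0_def using p0 cmom_nonneg by (auto intro!: add_nonneg_nonneg mult_nonneg_nonneg)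
    then show ?thesis unfolding Kc_def G0_def[symmetric]
      by (simp add: ennreal_mult[symmetric] ennreal_plus[symmetric] del: ennreal_plus)
  qed
  finally show ?thesis .
qed

definition Jset :: "nat \<Rightarrow> nat \<Rightarrow> int set" where
  "Jset N n = {- (int N * 2^n) ..< int N * 2^n}"

definition Dl :: "nat \<Rightarrow> int \<Rightarrow> 'w \<Rightarrow> real" where
  "Dl n j \<omega> = X ((of_int j + 1) / 2^n) \<omega> - X (of_int j / 2^n) \<omega>"

definition S :: "nat \<Rightarrow> nat \<Rightarrow> 'w \<Rightarrow> ennreal" where
  "S k N \<omega> = (\<Sum>n. ennreal (2^((k-2)*n) * (\<Sum>j\<in>Jset N n. (Dl n j \<omega>)^(2*k))))"

lemma S_meas[measurable]: "S k N \<in> borel_measurable M"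
  unfolding S_def Dl_def by measurable

lemma card_Jset: "real (card (Jset N n)) = 2 * real N * 2^n"
  unfolding Jset_def by simp

lemma level_bound:
  assumes k: "k \<ge> 2"
  shows "(\<integral>\<^sup>+\<omega>. ennreal (2^((k-2)*n) * (\<Sum>j\<in>Jset N n. (Dl n j \<omega>)^(2*k))) \<partial>M)
     \<le> ennreal (2 * real N * Kc k * (1/2)^n)"
proof -
  have fin: "finite (Jset N n)" unfolding Jset_def by simp
  have mom: "(\<integral>\<^sup>+\<omega>. ennreal ((Dl n j \<omega>)^(2*k)) \<partial>M) \<le> ennreal (Kc k * (1/2^n)^k)" for j
  proof -
    have "\<bar>(of_int j + 1) / 2^n - of_int j / 2^n\<bar> = (1/2^n::real)"
      by (simp add: diff_divide_distrib[symmetric])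
    moreover have "(1/2^n::real) \<le> 1" by simp
    ultimately show ?thesis unfolding Dl_def using X_moment[of "(of_int j + 1) / 2^n" "of_int j / 2^n" k] by simp
  qed
  have "(\<integral>\<^sup>+\<omega>. ennreal (2^((k-2)*n) * (\<Sum>j\<in>Jset N n. (Dl n j \<omega>)^(2*k))) \<partial>M)
      = (\<integral>\<^sup>+\<omega>. ennreal (2^((k-2)*n)) * (\<Sum>j\<in>Jset N n. ennreal ((Dl n j \<omega>)^(2*k))) \<partial>M)"
    by (intro nn_integral_cong) (simp add: ennreal_mult zero_le_even_power sum_nonneg)
  also have "\<dots> = ennreal (2^((k-2)*n)) * (\<Sum>j\<in>Jset N n. (\<integral>\<^sup>+\<omega>. ennreal ((Dl n j \<omega>)^(2*k)) \<partial>M))"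
    unfolding Dl_def by (subst nn_integral_cmult) (auto simp: nn_integral_sum simp del: sum_ennreal)
  also have "\<dots> \<le> ennreal (2^((k-2)*n)) * (\<Sum>j\<in>Jset N n. ennreal (Kc k * (1/2^n)^k))"
    using mom by (intro mult_left_mono sum_mono) auto
  also have "\<dots> = ennreal (2^((k-2)*n) * (real (card (Jset N n)) * (Kc k * (1/2^n)^k)))"
    using Kc_nonneg by (simp add: ennreal_mult ennreal_of_nat_eq_real_of_nat)
  also have "2^((k-2)*n) * (real (card (Jset N n)) * (Kc k * (1/2^n)^k)) = 2 * real N * Kc k * (1/2)^n"
  proof -
    obtain i where ki: "k = i + 2" using k le_Suc_ex by (metis add.commute)
    have "(2::real)^((k-2)*n) * 2^n * (1/2^n)^k = (1/2)^n"
      unfolding ki by (simp add: power_mult[symmetric] field_simps power_add mult.commute)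
    then show ?thesis unfolding card_Jset by (simp add: algebra_simps)
  qed
  finally show ?thesis .
qed

lemma S_int: "k \<ge> 2 \<Longrightarrow> (\<integral>\<^sup>+\<omega>. S k N \<omega> \<partial>M) \<noteq> \<infinity>"
proof -
  assume k: "k \<ge> 2"
  have "(\<integral>\<^sup>+\<omega>. S k N \<omega> \<partial>M) = (\<Sum>n. \<integral>\<^sup>+\<omega>. ennreal (2^((k-2)*n) * (\<Sum>j\<in>Jset N n. (Dl n j \<omega>)^(2*k))) \<partial>M)"
    unfolding S_def Dl_def by (rule nn_integral_suminf) measurable
  also have "\<dots> \<le> (\<Sum>n. ennreal (2 * real N * Kc k * (1/2)^n))"
    using level_bound[OF k] by (intro suminf_le) auto
  also have "\<dots> = ennreal (\<Sum>n. 2 * real N * Kc k * (1/2)^n)"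
    using Kc_nonneg by (intro suminf_ennreal2) (auto intro!: summable_mult summable_geometric)
  finally show ?thesis by (auto simp: top_unique)
qed

lemma good_hoelder:
  assumes fin: "S k N \<omega> \<noteq> \<infinity>" and k: "k \<ge> 3" and \<alpha>: "0 < \<alpha>" "\<alpha> \<le> 1/2 - 1/k"
  shows "\<exists>C. \<forall>s t. - real N \<le> s \<longrightarrow> s \<le> real N \<longrightarrow> - real N \<le> t \<longrightarrow> t \<le> real N \<longrightarrow>
           \<bar>gl (\<lambda>t. X t \<omega>) s - gl (\<lambda>t. X t \<omega>) t\<bar> \<le> C * \<bar>s - t\<bar> powr \<alpha>"
proof -
  define \<gamma> :: real where "\<gamma> = 1/2 - 1/k"
  have kr: "real k \<ge> 3" using k by simp
  have \<gamma>0: "\<gamma> > 0" unfolding \<gamma>_def using kr by (simp add: field_simps)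
  define q :: real where "q = 2 powr (-\<gamma>)"
  have q0: "0 < q" unfolding q_def by simp
  have q1: "q < 1" unfolding q_def using \<gamma>0 by (intro powr_less_one) auto
  define a where "a n = 2^((k-2)*n) * (\<Sum>j\<in>Jset N n. (Dl n j \<omega>)^(2*k))" for n
  have a0: "0 \<le> a n" for n unfolding a_def by (intro mult_nonneg_nonneg sum_nonneg) (auto simp: zero_le_even_power)
  have "(\<Sum>n. ennreal (a n)) \<noteq> \<top>" using fin unfolding S_def a_def by simp
  then have sa: "summable a" using a0 by (intro summable_suminf_not_top) auto
  define R where "R = suminf a"
  have aR: "a n \<le> R" for n
  proof -
    have "sum a {n} \<le> suminf a" using sa a0 by (intro sum_le_suminf) auto
    then show ?thesis unfolding R_def by simp
  qed
  define B where "B = root (2*k) R"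
  have R0: "0 \<le> R" using aR[of 0] a0[of 0] by linarith
  have B0: "0 \<le> B" unfolding B_def using R0 by (simp add: real_root_ge_zero)
  have qk: "q^(2*k) * 2^(k-2) = 1"
  proof -
    have "q^(2*k) = 2 powr (real (2*k) * (-\<gamma>))" unfolding q_def by (rule powr_power) simp
    also have "real (2*k) * (-\<gamma>) = - real (k - 2)" unfolding \<gamma>_def using kr by (simp add: field_simps of_nat_diff)
    finally have "q^(2*k) = 2 powr (- real (k-2))" .
    moreover have "(2::real)^(k-2) = 2 powr (real (k-2))" by (simp add: powr_realpow)
    ultimately show ?thesis by (simp add: powr_add[symmetric])
  qed
  have inc: "\<bar>X ((of_int j + 1) / 2^n) \<omega> - X (of_int j / 2^n) \<omega>\<bar> \<le> B * q^n"
    if j1: "- real N \<le> of_int j / 2^n" and j2: "(of_int j + 1) / 2^n \<le> real N" for n j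
  proof -
    have "- (real N * 2^n) \<le> of_int j" using j1 by (simp add: divide_le_eq field_simps)
    then have "real_of_int (- (int N * 2^n)) \<le> of_int j" by simp
    then have l: "- (int N * 2^n) \<le> j" by (simp only: of_int_le_iff)
    have "of_int j + 1 \<le> real N * 2^n" using j2 by (simp add: divide_le_eq)
    then have "real_of_int (j + 1) \<le> real_of_int (int N * 2^n)" by simp
    then have u: "j < int N * 2^n" by (simp only: of_int_le_iff)
    have jJ: "j \<in> Jset N n" unfolding Jset_def using l u by simp
    define d where "d = \<bar>Dl n j \<omega>\<bar>"
    define v where "v = d / q^n"
    have v0: "0 \<le> v" unfolding v_def d_def using q0 by simp
    have "2^((k-2)*n) * (Dl n j \<omega>)^(2*k) \<le> a n"
      unfolding a_def using jJ by (intro mult_left_mono member_le_sum) (auto simp: zero_le_even_power Jset_def)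
    also have "\<dots> \<le> R" by (rule aR)
    finally have 1: "2^((k-2)*n) * (Dl n j \<omega>)^(2*k) \<le> R" .
    have "v^(2*k) = d^(2*k) / (q^(2*k))^n" unfolding v_def by (simp add: power_divide power_mult[symmetric] mult.commute)
    also have "\<dots> = d^(2*k) * (2^(k-2))^n"
    proof -
      have "(q^(2*k))^n * (2^(k-2))^n = 1" using qk by (simp add: power_mult_distrib[symmetric])
      then show ?thesis using q0 by (simp add: field_simps)
    qed
    also have "\<dots> = 2^((k-2)*n) * (Dl n j \<omega>)^(2*k)"
    proof -
      have e1: "d^(2*k) = (Dl n j \<omega>)^(2*k)" unfolding d_def by (rule power_even_abs) simp
      have e2: "((2::real)^(k-2))^n = 2^((k-2)*n)" by (simp add: power_mult)
      show ?thesis unfolding e1 e2 by (rule mult.commute)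
    qed
    finally have "v^(2*k) \<le> R" using 1 by simp
    then have "root (2*k) (v^(2*k)) \<le> B" unfolding B_def using k by (intro real_root_le_mono) auto
    then have "v \<le> B" using v0 k by (simp add: real_root_power_cancel)
    then have "d \<le> B * q^n" unfolding v_def using q0 by (simp add: divide_le_eq)
    then show ?thesis unfolding d_def Dl_def .
  qed
  interpret ch: chain "\<lambda>t. X t \<omega>" q B N
    using q0 q1 B0 inc by unfold_locales auto
  show ?thesis using ch.hoelder[of \<gamma> \<alpha>] q_def \<gamma>0 \<alpha> unfolding \<gamma>_def by auto
qed

definition G :: "'w set" where "G = {\<omega> \<in> space M. \<forall>k N. S (k+3) N \<omega> \<noteq> \<infinity>}"

definition Y :: "real \<Rightarrow> 'w \<Rightarrow> real" where
  "Y t \<omega> = (if \<omega> \<in> G then lim (\<lambda>m. X (dy m t) \<omega>) else 0)"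

lemma G_sets: "G \<in> sets M"
  unfolding G_def by measurable

lemma AE_G: "AE \<omega> in M. \<omega> \<in> G"
proof -
  have "AE \<omega> in M. \<forall>k N. S (k+3) N \<omega> \<noteq> \<infinity>"
  proof (subst AE_all_countable, intro allI, subst AE_all_countable, intro allI)
    fix k N
    show "AE \<omega> in M. S (k+3) N \<omega> \<noteq> \<infinity>"
      using S_int[of "k+3" N] by (intro nn_integral_PInf_AE) auto
  qed
  then show ?thesis by (auto simp: G_def elim: eventually_mono)
qed

lemma Y_meas: "Y t \<in> borel_measurable M"
  unfolding Y_def
  by (rule measurable_If_set) (auto intro!: borel_measurable_lim_metric simp: G_sets)

lemma conv_AE: "AE \<omega> in M. (\<lambda>m. X (dy m t) \<omega>) \<longlonglongrightarrow> X t \<omega>"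
proof -
  define T where "T \<omega> = (\<Sum>m. ennreal ((X (dy m t) \<omega> - X t \<omega>)^(2*1)))" for \<omega>
  have bm: "\<bar>dy m t - t\<bar> \<le> (1/2)^m" for m
    using dy_le[of m t] dy_ge[of t m] by (simp add: power_one_over)
  have "(\<integral>\<^sup>+\<omega>. T \<omega> \<partial>M) = (\<Sum>m. \<integral>\<^sup>+\<omega>. ennreal ((X (dy m t) \<omega> - X t \<omega>)^(2*1)) \<partial>M)"
    unfolding T_def by (rule nn_integral_suminf) measurable
  also have "\<dots> \<le> (\<Sum>m. ennreal (Kc 1 * (1/2)^m))"
  proof (intro suminf_le allI)
    fix m
    have b1: "\<bar>dy m t - t\<bar> \<le> 1" using bm[of m] by (rule order.trans) (simp add: power_le_one)
    note X_moment[OF b1, of 1]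
    also have "ennreal (Kc 1 * \<bar>dy m t - t\<bar> ^ 1) \<le> ennreal (Kc 1 * (1/2)^m)"
      using bm[of m] Kc_nonneg[of 1] by (intro ennreal_leI mult_left_mono) auto
    finally show "(\<integral>\<^sup>+\<omega>. ennreal ((X (dy m t) \<omega> - X t \<omega>)^(2*1)) \<partial>M) \<le> ennreal (Kc 1 * (1/2)^m)" .
  qed auto
  also have "\<dots> = ennreal (\<Sum>m. Kc 1 * (1/2)^m)"
    using Kc_nonneg by (intro suminf_ennreal2) (auto intro!: summable_mult summable_geometric)
  finally have "(\<integral>\<^sup>+\<omega>. T \<omega> \<partial>M) \<noteq> \<infinity>" by (auto simp: top_unique)
  then have "AE \<omega> in M. T \<omega> \<noteq> \<infinity>"
    by (intro nn_integral_PInf_AE) (auto simp: T_def)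
  then show ?thesis
  proof (rule eventually_mono)
    fix \<omega> assume "T \<omega> \<noteq> \<infinity>"
    then have "summable (\<lambda>m. (X (dy m t) \<omega> - X t \<omega>)^(2*1))"
      unfolding T_def by (intro summable_suminf_not_top) (auto simp: zero_le_even_power)
    then have "(\<lambda>m. (X (dy m t) \<omega> - X t \<omega>)^(2*1)) \<longlonglongrightarrow> 0" by (rule summable_LIMSEQ_zero)
    then have "(\<lambda>m. sqrt ((X (dy m t) \<omega> - X t \<omega>)^(2*1))) \<longlonglongrightarrow> sqrt 0" by (intro tendsto_intros)
    then have "(\<lambda>m. \<bar>X (dy m t) \<omega> - X t \<omega>\<bar>) \<longlonglongrightarrow> 0" by simp
    then have "(\<lambda>m. X (dy m t) \<omega> - X t \<omega>) \<longlonglongrightarrow> 0" by (simp only: tendsto_rabs_zero_iff)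
    then have "(\<lambda>m. (X (dy m t) \<omega> - X t \<omega>) + X t \<omega>) \<longlonglongrightarrow> 0 + X t \<omega>" by (intro tendsto_intros)
    then show "(\<lambda>m. X (dy m t) \<omega>) \<longlonglongrightarrow> X t \<omega>" by simp
  qed
qed

lemma Y_AE: "AE \<omega> in M. Y t \<omega> = X t \<omega>"
  using AE_G conv_AE[of t]
  by eventually_elim (auto simp: Y_def limI)

lemma Y_hoelder:
  assumes \<alpha>: "0 < \<alpha>" "\<alpha> < 1/2"
  shows "locally_hoelder \<alpha> (\<lambda>t. Y t \<omega>)"
proof (cases "\<omega> \<in> G")
  case False
  then show ?thesis unfolding locally_hoelder_def Y_def by (auto intro: exI[of _ 0])
next
  case True
  define k0 where "k0 = nat \<lceil>1 / (1/2 - \<alpha>)\<rceil>"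
  define k where "k = k0 + 3"
  have "1 / (1/2 - \<alpha>) \<le> real k0" unfolding k0_def by linarith
  then have "1 / (1/2 - \<alpha>) \<le> real k" unfolding k_def by simp
  moreover have "0 < 1/2 - \<alpha>" using \<alpha> by simp
  ultimately have "1 \<le> real k * (1/2 - \<alpha>)" by (simp add: pos_divide_le_eq)
  moreover have "0 < real k" unfolding k_def by simp
  ultimately have "1 / real k \<le> 1/2 - \<alpha>" by (simp add: pos_divide_le_eq mult.commute)
  then have ak: "\<alpha> \<le> 1/2 - 1/real k" by simp
  have eq: "(\<lambda>t. Y t \<omega>) = gl (\<lambda>t. X t \<omega>)"
    using True by (auto simp: Y_def gl_def fun_eq_iff)
  show ?thesis unfolding locally_hoelder_def eq
  proof (intro allI)
    fix a b :: real
    define N where "N = nat \<lceil>max \<bar>a\<bar> \<bar>b\<bar>\<rceil>"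
    have Nb: "max \<bar>a\<bar> \<bar>b\<bar> \<le> real N" unfolding N_def by linarith
    have ab: "- real N \<le> a" "b \<le> real N" using Nb by (auto simp: max_def split: if_splits)
    have fin: "S k N \<omega> \<noteq> \<infinity>" using True unfolding G_def k_def by auto
    obtain C where C: "\<forall>s t. - real N \<le> s \<longrightarrow> s \<le> real N \<longrightarrow> - real N \<le> t \<longrightarrow> t \<le> real N \<longrightarrow>
           \<bar>gl (\<lambda>t. X t \<omega>) s - gl (\<lambda>t. X t \<omega>) t\<bar> \<le> C * \<bar>s - t\<bar> powr \<alpha>"
      using good_hoelder[OF fin _ \<alpha>(1) ak] unfolding k_def by auto
    show "\<exists>C. \<forall>s\<in>{a..b}. \<forall>t\<in>{a..b}. \<bar>gl (\<lambda>t. X t \<omega>) s - gl (\<lambda>t. X t \<omega>) t\<bar> \<le> C * \<bar>s - t\<bar> powr \<alpha>"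
    proof (intro exI[of _ C] ballI)
      fix s t assume s: "s \<in> {a..b}" and t: "t \<in> {a..b}"
      have "- real N \<le> s" "s \<le> real N" "- real N \<le> t" "t \<le> real N" using s t ab by auto
      then show "\<bar>gl (\<lambda>t. X t \<omega>) s - gl (\<lambda>t. X t \<omega>) t\<bar> \<le> C * \<bar>s - t\<bar> powr \<alpha>"
        using C by blast
    qed
  qed
qed

end

theorem mainTheorem5:
  fixes M :: "'w measure"
    and L :: "(real \<times> real) set \<Rightarrow> 'w \<Rightarrow> real"
    and \<mu> \<sigma> :: real
    and \<phi> :: "real \<Rightarrow> real"
    and A :: "(real \<times> real) set"
    and X :: "real \<Rightarrow> 'w \<Rightarrow> real"
  assumes levy: "gaussian_levy_basis M L \<mu> \<sigma>"
    and cont: "continuous_on {..0} \<phi>"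
    and incr: "mono_on {..0} \<phi>"
    and nonneg: "\<forall>s\<le>0. \<phi> s \<ge> 0"
    and integr: "set_integrable lborel {..0} \<phi>"
    and A_def: "A = {(s, x). s < 0 \<and> 0 < x \<and> x < \<phi> s}"
    and X_def: "\<forall>t. X t = L ((\<lambda>p. p + (t, 0)) ` A)"
  shows "\<exists>Y :: real \<Rightarrow> 'w \<Rightarrow> real.
           (\<forall>t. Y t \<in> borel_measurable M \<and> (AE \<omega> in M. Y t \<omega> = X t \<omega>)) \<and>
           (\<forall>\<omega>\<in>space M. \<forall>\<alpha>. 0 < \<alpha> \<and> \<alpha> < 1/2 \<longrightarrow> locally_hoelder \<alpha> (\<lambda>t. Y t \<omega>))"
proof -
  interpret lbx M L \<mu> \<sigma> \<phi> A X
    using levy cont incr nonneg integr A_def X_def by unfold_locales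
  show ?thesis
    by (intro exI[of _ Y] conjI allI ballI impI) (auto intro: Y_meas Y_AE Y_hoelder)
qed

end
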